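(* Let $\mathcal{X},\mathcal{Y}$ be finite sets and $p(X,Y)$ a fully supported probability distribution on $\mathcal{X}\times\mathcal{Y}$, and let $\lambda=I(X;Y)$. Then the solutions of the IIB problem with parameter $\lambda$ are exactly the channels of the form $q(t|x,y)=\gamma(t\mid\pi(x,y))$ for a congruent channel $\gamma\in C(\{1,\dots,n\},\mathcal{T})$.
   Context: $\mathcal{T}:=\mathbb{N}$; $C(\mathcal{A},\mathcal{B})$ is the set of channels (conditional probabilities) from $\mathcal{A}$ to $\mathcal{B}$. For $\kappa\in C(\mathcal{X}\times\mathcal{Y},\mathcal{T})$ and a distribution $r$ on $\mathcal{X}\times\mathcal{Y}$, $\kappa(r)(t)=\sum_{x,y}\kappa(t|x,y)r(x,y)$; $I_\kappa(X,Y;T)$ is the mutual information under $p(x,y)\kappa(t|x,y)$; $D$ is the KL divergence. The IIB problem with parameter $\lambda\in[0,I(X;Y)]$: minimise $I_\kappa(X,Y;T)$ over $\kappa\in C(\mathcal{X}\times\mathcal{Y},\mathcal{T})$ subject to $D(\kappa(p(X,Y))\|\kappa(p(X)p(Y)))=\lambda$. The equivalence relation $(x,y)\sim(x',y')$ iff $\frac{p(x,y)}{p(x)p(y)}=\frac{p(x',y')}{p(x')p(y')}$ has classes $\mathcal{S}_1,\dots,\mathcal{S}_n$ partitioning $\mathcal{X}\times\mathcal{Y}$, and $\pi:\mathcal{X}\times\mathcal{Y}\to\{1,\dots,n\}$ is the deterministic clustering $\pi(x,y)=j$ iff $(x,y)\in\mathcal{S}_j$. A channel $\gamma$ is congruent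 if for distinct inputs $a\neq a'$ the supports of $\gamma(\cdot|a)$ and $\gamma(\cdot|a')$ are disjoint. *)

theory Defs
  imports "HOL-Analysis.Analysis"
begin

text \<open>Logarithms are natural (any fixed base gives the
same statement since lambda = I(X;Y) uses the same base). Convention 0 log 0 = 0 is
automatic because terms with zero weight vanish.\<close>

definition channel :: "'a set \<Rightarrow> ('a \<Rightarrow> nat \<Rightarrow> real) \<Rightarrow> bool" where
  "channel A k \<longleftrightarrow> (\<forall>a\<in>A. (\<forall>t. k a t \<ge> 0) \<and> (k a) sums 1)"

definition push :: "('a::finite \<Rightarrow> nat \<Rightarrow> real) \<Rightarrow> ('a \<Rightarrow> real) \<Rightarrow> nat \<Rightarrow> real" where
  "push k r t = (\<Sum>a\<in>UNIV. k a t * r a)"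

definition margX :: "('x::finite \<times> 'y::finite \<Rightarrow> real) \<Rightarrow> 'x \<Rightarrow> real" where
  "margX p x = (\<Sum>y\<in>UNIV. p (x, y))"

definition margY :: "('x::finite \<times> 'y::finite \<Rightarrow> real) \<Rightarrow> 'y \<Rightarrow> real" where
  "margY p y = (\<Sum>x\<in>UNIV. p (x, y))"

definition prodmarg :: "('x::finite \<times> 'y::finite \<Rightarrow> real) \<Rightarrow> 'x \<times> 'y \<Rightarrow> real" where
  "prodmarg p = (\<lambda>(x, y). margX p x * margY p y)"

definition KL :: "(nat \<Rightarrow> real) \<Rightarrow> (nat \<Rightarrow> real) \<Rightarrow> real" where
  "KL P Q = (\<Sum>t. P t * ln (P t / Q t))"

definition MI :: "('x::finite \<times> 'y::finite \<Rightarrow> real) \<Rightarrow> real" where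
  "MI p = (\<Sum>a\<in>UNIV. p a * ln (p a / prodmarg p a))"

definition MI_ch :: "('a::finite \<Rightarrow> real) \<Rightarrow> ('a \<Rightarrow> nat \<Rightarrow> real) \<Rightarrow> real" where
  "MI_ch p k = (\<Sum>t. \<Sum>a\<in>UNIV. p a * k a t * ln (k a t / push k p t))"

definition IIB_constraint :: "('x::finite \<times> 'y::finite \<Rightarrow> real) \<Rightarrow> real \<Rightarrow> ('x \<times> 'y \<Rightarrow> nat \<Rightarrow> real) \<Rightarrow> bool" where
  "IIB_constraint p lam k \<longleftrightarrow> channel UNIV k \<and> KL (push k p) (push k (prodmarg p)) = lam"

definition IIB_solution :: "('x::finite \<times> 'y::finite \<Rightarrow> real) \<Rightarrow> real \<Rightarrow> ('x \<times> 'y \<Rightarrow> nat \<Rightarrow> real) \<Rightarrow> bool" where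
  "IIB_solution p lam k \<longleftrightarrow> IIB_constraint p lam k \<and>
     (\<forall>k'. IIB_constraint p lam k' \<longrightarrow> MI_ch p k \<le> MI_ch p k')"

definition congruent_channel :: "'a set \<Rightarrow> ('a \<Rightarrow> nat \<Rightarrow> real) \<Rightarrow> bool" where
  "congruent_channel A g \<longleftrightarrow> channel A g \<and>
     (\<forall>a\<in>A. \<forall>a'\<in>A. a \<noteq> a' \<longrightarrow> (\<forall>t. g a t = 0 \<or> g a' t = 0))"

end

theory Submission
  imports Defs
begin

lemma term_bound:
  fixes u v :: real assumes "u \<ge> 0" "v > 0"
  shows "u * ln (u / v) \<ge> u - v"
proof (cases "u = 0")
  case True then show ?thesis using assms by simp
next
  case False
  then have u: "u > 0" using assms by simp
  have "ln (v / u) \<le> v / u - 1" using ln_le_minus_one[of "v/u"] u assms by simp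
  moreover have "ln (u / v) = - ln (v / u)" using u assms by (simp add: ln_div)
  ultimately have "ln (u / v) \<ge> 1 - v / u" by simp
  then have "u * ln (u / v) \<ge> u * (1 - v / u)" using u by (simp add: mult_left_mono)
  also have "u * (1 - v / u) = u - v" using u by (simp add: field_simps)
  finally show ?thesis .
qed

lemma term_eq:
  fixes u v :: real assumes "u \<ge> 0" "v > 0" "u * ln (u / v) = u - v"
  shows "u = v"
proof -
  have u: "u > 0" using assms by (cases "u = 0") auto
  have "ln (u / v) = - ln (v / u)" using u assms by (simp add: ln_div)
  with assms(3) have "u * ln (v / u) = v - u" by simp
  then have "ln (v / u) = v / u - 1" using u by (simp add: field_simps)
  then have "v / u = 1" using ln_eq_minus_one[of "v/u"] u assms by simp
  then show ?thesis using u by simp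
qed

lemma gibbs:
  fixes u v :: "'a \<Rightarrow> real"
  assumes fin: "finite I" and un: "\<forall>i\<in>I. u i \<ge> 0" and vp: "\<forall>i\<in>I. v i > 0"
    and su: "sum u I = sum v I"
  shows gibbs_ge: "(\<Sum>i\<in>I. u i * ln (u i / v i)) \<ge> 0"
    and gibbs_eq: "(\<Sum>i\<in>I. u i * ln (u i / v i)) = 0 \<Longrightarrow> \<forall>i\<in>I. u i = v i"
proof -
  have tb: "\<forall>i\<in>I. u i * ln (u i / v i) - (u i - v i) \<ge> 0"
  proof
    fix i assume "i \<in> I"
    then have "u i * ln (u i / v i) \<ge> u i - v i" using un vp term_bound[of "u i" "v i"] by simp
    then show "u i * ln (u i / v i) - (u i - v i) \<ge> 0" by linarith
  qed
  have d: "(\<Sum>i\<in>I. u i - v i) = 0" using su by (simp only: sum_subtractf)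
  have eq: "(\<Sum>i\<in>I. u i * ln (u i / v i)) = (\<Sum>i\<in>I. u i * ln (u i / v i) - (u i - v i))"
    by (simp only: sum_subtractf su diff_self diff_zero)
  show "(\<Sum>i\<in>I. u i * ln (u i / v i)) \<ge> 0" unfolding eq by (rule sum_nonneg) (use tb in simp)
  assume "(\<Sum>i\<in>I. u i * ln (u i / v i)) = 0"
  then have "(\<Sum>i\<in>I. u i * ln (u i / v i) - (u i - v i)) = 0" using eq by simp
  then have z: "\<forall>i\<in>I. u i * ln (u i / v i) - (u i - v i) = 0"
    using sum_nonneg_eq_0_iff[OF fin, of "\<lambda>i. u i * ln (u i / v i) - (u i - v i)"] tb by simp
  show "\<forall>i\<in>I. u i = v i"
  proof
    fix i assume i: "i \<in> I"
    then have "u i * ln (u i / v i) = u i - v i" using z by simp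
    then show "u i = v i" using term_eq[of "u i" "v i"] un vp i by simp
  qed
qed

locale iib =
  fixes p :: "'x::finite \<times> 'y::finite \<Rightarrow> real" and \<pi> :: "'x \<times> 'y \<Rightarrow> nat" and n :: nat
  assumes pos: "\<forall>a. p a > 0"
    and total: "(\<Sum>a\<in>UNIV. p a) = 1"
    and pi_range: "\<pi> ` UNIV = {1..n}"
    and pi_classes: "\<forall>a b. \<pi> a = \<pi> b \<longleftrightarrow> p a / prodmarg p a = p b / prodmarg p b"
begin

definition "r = prodmarg p"
definition "\<rho> a = p a / r a"
definition "Pc j = sum p {b. \<pi> b = j}"
definition "Hc = (\<Sum>a\<in>UNIV. p a * (- ln (Pc (\<pi> a))))"

definition "hh k t = (\<Sum>a\<in>UNIV. k a t * p a * ln (\<rho> a))"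
definition "gg k t = push k p t * ln (push k p t / push k r t)"
definition "ff k t = (\<Sum>a\<in>UNIV. p a * k a t * ln (k a t / push k p t))"
definition "ee k t = (\<Sum>a\<in>UNIV. p a * k a t * (- ln (Pc (\<pi> a))))"
definition "ww k t = (\<Sum>a\<in>UNIV. p a * k a t * (- ln (p a)))"

lemma pos': "p a > 0" using pos by blast

lemma r_pos: "r a > 0"
  unfolding r_def prodmarg_def margX_def margY_def
  by (cases a) (auto intro!: sum_pos mult_pos_pos simp: pos')

lemma pi_iff: "\<pi> a = \<pi> b \<longleftrightarrow> \<rho> a = \<rho> b"
  using pi_classes unfolding \<rho>_def r_def by blast

lemma Pc_pos: "Pc (\<pi> a) > 0"
proof -
  have "p a \<le> Pc (\<pi> a)" unfolding Pc_def
    by (rule member_le_sum) (auto simp: less_imp_le[OF pos'])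
  then show ?thesis using pos'[of a] by simp
qed

lemma Pc_le1: "Pc j \<le> 1"
proof -
  have "Pc j \<le> sum p UNIV" unfolding Pc_def
    by (rule sum_mono2) (auto simp: less_imp_le[OF pos'])
  then show ?thesis using total by simp
qed

lemma ch_nonneg: "channel UNIV k \<Longrightarrow> k a t \<ge> 0"
  unfolding channel_def by blast
lemma ch_sums: "channel UNIV k \<Longrightarrow> k a sums 1"
  unfolding channel_def by blast

lemma push_nonneg: "channel UNIV k \<Longrightarrow> (\<forall>a. w a \<ge> 0) \<Longrightarrow> push k w t \<ge> 0"
  unfolding push_def by (auto intro!: sum_nonneg simp: ch_nonneg)

lemma push_sums: "channel UNIV k \<Longrightarrow> push k w sums (\<Sum>a\<in>UNIV. w a)"
proof -
  assume ch: "channel UNIV k"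
  have "(\<lambda>t. \<Sum>a\<in>UNIV. k a t * w a) sums (\<Sum>a\<in>UNIV. 1 * w a)"
    by (rule sums_sum, rule sums_mult2, rule ch_sums[OF ch])
  then show ?thesis unfolding push_def by simp
qed

lemma q_zero: "channel UNIV k \<Longrightarrow> push k p t = 0 \<Longrightarrow> k a t = 0"
proof -
  assume ch: "channel UNIV k" and z: "push k p t = 0"
  have "\<forall>a\<in>UNIV. k a t * p a = 0"
    using z unfolding push_def
    by (subst sum_nonneg_eq_0_iff[symmetric]) (auto simp: ch_nonneg[OF ch] less_imp_le[OF pos'])
  then have "k a t * p a = 0" by blast
  then show ?thesis using pos'[of a] by simp
qed

lemma q_ge: "channel UNIV k \<Longrightarrow> push k w t \<ge> k a t * w a" if "\<forall>a. w a \<ge> 0"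
proof -
  assume ch: "channel UNIV k"
  show ?thesis unfolding push_def
    by (rule member_le_sum) (auto simp: ch_nonneg[OF ch] that)
qed

lemma hh_sums: "channel UNIV k \<Longrightarrow> hh k sums MI p"
proof -
  assume ch: "channel UNIV k"
  have "(\<lambda>t. \<Sum>a\<in>UNIV. k a t * (p a * ln (\<rho> a))) sums (\<Sum>a\<in>UNIV. 1 * (p a * ln (\<rho> a)))"
    by (rule sums_sum, rule sums_mult2, rule ch_sums[OF ch])
  then show ?thesis unfolding hh_def MI_def \<rho>_def r_def by (simp add: mult.assoc)
qed

lemma ee_sums: "channel UNIV k \<Longrightarrow> ee k sums Hc"
proof -
  assume ch: "channel UNIV k"
  have "(\<lambda>t. \<Sum>a\<in>UNIV. k a t * (p a * (- ln (Pc (\<pi> a))))) sums (\<Sum>a\<in>UNIV. 1 * (p a * (- ln (Pc (\<pi> a)))))"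
    by (rule sums_sum, rule sums_mult2, rule ch_sums[OF ch])
  then show ?thesis unfolding ee_def Hc_def by (simp add: mult.assoc mult.left_commute)
qed

lemma ww_sums: "channel UNIV k \<Longrightarrow> ww k sums (\<Sum>a\<in>UNIV. p a * (- ln (p a)))"
proof -
  assume ch: "channel UNIV k"
  have "(\<lambda>t. \<Sum>a\<in>UNIV. k a t * (p a * (- ln (p a)))) sums (\<Sum>a\<in>UNIV. 1 * (p a * (- ln (p a))))"
    by (rule sums_sum, rule sums_mult2, rule ch_sums[OF ch])
  then show ?thesis unfolding ww_def by (simp add: mult.assoc mult.left_commute)
qed

lemma ee_nonneg: "channel UNIV k \<Longrightarrow> ee k t \<ge> 0"
proof -
  assume ch: "channel UNIV k"
  have "p a * k a t * (- ln (Pc (\<pi> a))) \<ge> 0" for a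
  proof -
    have "ln (Pc (\<pi> a)) \<le> 0" using Pc_pos[of a] Pc_le1[of "\<pi> a"] by simp
    moreover have "p a * k a t \<ge> 0" using ch_nonneg[OF ch, of a t] pos'[of a] by simp
    ultimately show ?thesis by (simp add: mult_nonneg_nonpos)
  qed
  then show ?thesis unfolding ee_def by (rule sum_nonneg)
qed

lemma ff_le_ww: "channel UNIV k \<Longrightarrow> ff k t \<le> ww k t"
proof -
  assume ch: "channel UNIV k"
  have "p a * k a t * ln (k a t / push k p t) \<le> p a * k a t * (- ln (p a))" for a
  proof (cases "k a t = 0")
    case True then show ?thesis by simp
  next
    case False
    then have k: "k a t > 0" using ch_nonneg[OF ch, of a t] by simp
    have qg: "push k p t \<ge> k a t * p a" using q_ge[OF _ ch] pos' less_imp_le by blast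
    have qp: "push k p t > 0" using qg k pos'[of a] by (smt (verit) mult_pos_pos)
    have "k a t / push k p t \<le> 1 / p a" using qg qp k pos'[of a]
      by (simp add: field_simps)
    then have "ln (k a t / push k p t) \<le> ln (1 / p a)" using k qp pos'[of a] by simp
    also have "\<dots> = - ln (p a)" using pos'[of a] by (simp add: ln_div)
    finally have L: "ln (k a t / push k p t) \<le> - ln (p a)" .
    have "p a * k a t \<ge> 0" using k pos'[of a] by simp
    then show ?thesis by (rule mult_left_mono[OF L])
  qed
  then show ?thesis unfolding ff_def ww_def by (rule sum_mono)
qed


lemma s_pos: "channel UNIV k \<Longrightarrow> k a t > 0 \<Longrightarrow> push k r t > 0"
proof -
  assume ch: "channel UNIV k" and k: "k a t > 0"
  have "push k r t \<ge> k a t * r a" using q_ge[OF _ ch] r_pos less_imp_le by blast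
  moreover have "k a t * r a > 0" using k r_pos by simp
  ultimately show ?thesis by simp
qed

lemma q_pos: "channel UNIV k \<Longrightarrow> k a t > 0 \<Longrightarrow> push k p t > 0"
proof -
  assume ch: "channel UNIV k" and k: "k a t > 0"
  have "push k p t \<ge> k a t * p a" using q_ge[OF _ ch] pos' less_imp_le by blast
  moreover have "k a t * p a > 0" using k pos' by simp
  ultimately show ?thesis by simp
qed

lemma exists_pos: "channel UNIV k \<Longrightarrow> push k p t \<noteq> 0 \<Longrightarrow> \<exists>a. k a t > 0"
proof -
  assume ch: "channel UNIV k" and nz: "push k p t \<noteq> 0"
  have "\<exists>a. k a t \<noteq> 0"
  proof (rule ccontr)
    assume "\<not> (\<exists>a. k a t \<noteq> 0)"
    then have z: "\<And>a. k a t = 0" by blast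
    have "push k p t = 0" unfolding push_def by (simp add: z)
    then show False using nz by simp
  qed
  then obtain a where "k a t \<noteq> 0" by blast
  then have "k a t > 0" using ch_nonneg[OF ch, of a t] by simp
  then show ?thesis by blast
qed

lemma D_props:
  assumes ch: "channel UNIV k"
  shows "hh k t - gg k t \<ge> 0"
    and "hh k t - gg k t = 0 \<Longrightarrow> \<forall>a b. k a t > 0 \<longrightarrow> k b t > 0 \<longrightarrow> \<rho> a = \<rho> b"
proof -
  have "hh k t - gg k t \<ge> 0 \<and> (hh k t - gg k t = 0 \<longrightarrow> (\<forall>a b. k a t > 0 \<longrightarrow> k b t > 0 \<longrightarrow> \<rho> a = \<rho> b))"
  proof (cases "push k p t = 0")
    case True
    then have z: "\<And>a. k a t = 0" using q_zero[OF ch] by blast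
    show ?thesis unfolding hh_def gg_def using True by (simp add: z)
  next
    case False
    define q where "q = push k p t"
    define s where "s = push k r t"
    have knn: "\<And>a. k a t \<ge> 0" using ch_nonneg[OF ch] by blast
    obtain a0 where a0: "k a0 t > 0" using exists_pos[OF ch False] by blast
    have qp: "q > 0" using q_pos[OF ch a0] unfolding q_def .
    have sp: "s > 0" using s_pos[OF ch a0] unfolding s_def .
    define I where "I = {a. k a t > 0}"
    define u where "u a = k a t * p a" for a
    define v where "v a = k a t * r a * (q / s)" for a
    have out: "\<And>a. a \<notin> I \<Longrightarrow> k a t = 0"
    proof -
      fix a assume "a \<notin> I"
      then have "\<not> k a t > 0" unfolding I_def by simp
      then show "k a t = 0" using knn[of a] by simp
    qed
    have sumI: "sum g I = sum g UNIV" if gz: "\<And>a. k a t = 0 \<Longrightarrow> g a = 0" for g :: "_ \<Rightarrow> real"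
    proof (rule sum.mono_neutral_left)
      show "\<forall>i\<in>UNIV - I. g i = 0" using out gz by blast
    qed simp_all
    have Su: "sum u I = q" unfolding q_def push_def u_def by (rule sumI) simp
    have Sv: "sum v I = q"
    proof -
      have "sum v I = (\<Sum>a\<in>I. k a t * r a) * (q / s)" unfolding v_def
        by (simp only: sum_distrib_right)
      also have "(\<Sum>a\<in>I. k a t * r a) = s" unfolding s_def push_def by (rule sumI) simp
      finally show ?thesis using sp by simp
    qed
    have upos: "\<forall>a\<in>I. u a \<ge> 0"
    proof
      fix a assume "a \<in> I"
      show "u a \<ge> 0" unfolding u_def using knn[of a] pos'[of a] by simp
    qed
    have vpos: "\<forall>a\<in>I. v a > 0"
    proof
      fix a assume "a \<in> I"
      then have "k a t > 0" unfolding I_def by simp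
      then show "v a > 0" unfolding v_def using r_pos[of a] qp sp by simp
    qed
    have eq: "hh k t - gg k t = (\<Sum>a\<in>I. u a * ln (u a / v a))"
    proof -
      have lnuv: "u a * ln (u a / v a) = u a * ln (\<rho> a) - u a * ln (q / s)" if aI: "a \<in> I" for a
      proof -
        have ka: "k a t > 0" using aI unfolding I_def by simp
        have ra: "r a > 0" using r_pos[of a] .
        have "u a / v a = \<rho> a / (q / s)" unfolding u_def v_def \<rho>_def
          using ka ra by (simp add: field_simps)
        moreover have "\<rho> a > 0" unfolding \<rho>_def using pos'[of a] ra by simp
        moreover have "q / s > 0" using qp sp by simp
        ultimately have "ln (u a / v a) = ln (\<rho> a) - ln (q / s)" using ln_divide_pos by metis
        then show ?thesis by (simp add: right_diff_distrib)
      qed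
      have "(\<Sum>a\<in>I. u a * ln (u a / v a)) = (\<Sum>a\<in>I. u a * ln (\<rho> a) - u a * ln (q / s))"
        by (rule sum.cong) (simp_all add: lnuv)
      also have "\<dots> = (\<Sum>a\<in>I. u a * ln (\<rho> a)) - (\<Sum>a\<in>I. u a) * ln (q / s)"
        by (simp only: sum_subtractf sum_distrib_right)
      also have "(\<Sum>a\<in>I. u a * ln (\<rho> a)) = hh k t" unfolding hh_def u_def
        by (rule sumI) simp
      also have "(\<Sum>a\<in>I. u a) * ln (q / s) = gg k t" unfolding gg_def Su q_def s_def ..
      finally show ?thesis by simp
    qed
    have g1: "hh k t - gg k t \<ge> 0" unfolding eq
      using gibbs_ge[of I u v] upos vpos Su Sv by simp
    have g2: "\<forall>a b. k a t > 0 \<longrightarrow> k b t > 0 \<longrightarrow> \<rho> a = \<rho> b" if z: "hh k t - gg k t = 0"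
    proof -
      have uv: "\<forall>a\<in>I. u a = v a" using gibbs_eq[of I u v] upos vpos Su Sv z eq by simp
      have rq: "\<rho> a = q / s" if "k a t > 0" for a
      proof -
        have "a \<in> I" using that unfolding I_def by simp
        then have "k a t * p a = k a t * r a * (q / s)" using uv unfolding u_def v_def by blast
        then have e1: "k a t * p a = k a t * (r a * (q / s))" by (simp only: mult.assoc)
        have kne: "k a t \<noteq> 0" using that by simp
        have "p a = r a * (q / s)" using mult_left_cancel[OF kne] e1 by blast
        then show ?thesis unfolding \<rho>_def using r_pos[of a] by (simp add: field_simps)
      qed
      show ?thesis using rq by simp
    qed
    show ?thesis using g1 g2 by blast
  qed
  then show "hh k t - gg k t \<ge> 0"
    and "hh k t - gg k t = 0 \<Longrightarrow> \<forall>a b. k a t > 0 \<longrightarrow> k b t > 0 \<longrightarrow> \<rho> a = \<rho> b" by blast+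
qed

lemma gg_lower: "channel UNIV k \<Longrightarrow> gg k t \<ge> push k p t - push k r t"
proof -
  assume ch: "channel UNIV k"
  show ?thesis
  proof (cases "push k p t = 0")
    case True
    have "push k r t \<ge> 0" by (rule push_nonneg[OF ch]) (use r_pos less_imp_le in blast)
    then show ?thesis unfolding gg_def using True by simp
  next
    case False
    obtain a0 where a0: "k a0 t > 0" using exists_pos[OF ch False] by blast
    show ?thesis unfolding gg_def
      by (rule term_bound) (use q_pos[OF ch a0] s_pos[OF ch a0] in auto)
  qed
qed

lemma purity:
  assumes ch: "channel UNIV k" and kl: "KL (push k p) (push k r) = MI p"
  shows "\<forall>t a b. k a t > 0 \<longrightarrow> k b t > 0 \<longrightarrow> \<pi> a = \<pi> b"
proof -
  define D where "D t = hh k t - gg k t" for t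
  have Dn: "D t \<ge> 0" for t unfolding D_def using D_props(1)[OF ch] .
  have hs: "summable (hh k)" using hh_sums[OF ch] sums_summable by blast
  have qs: "summable (push k p)" using push_sums[OF ch] sums_summable by blast
  have ss: "summable (push k r)" using push_sums[OF ch] sums_summable by blast
  have Ds: "summable D"
  proof (rule summable_comparison_test')
    show "summable (\<lambda>t. hh k t - push k p t + push k r t)"
      using hs qs ss by (intro summable_add summable_diff) auto
    show "norm (D t) \<le> hh k t - push k p t + push k r t" for t
      using Dn[of t] gg_lower[OF ch, of t] unfolding D_def by simp
  qed
  have gs: "gg k = (\<lambda>t. hh k t - D t)" unfolding D_def by auto
  have "KL (push k p) (push k r) = suminf (gg k)" unfolding KL_def gg_def by simp
  also have "\<dots> = suminf (hh k) - suminf D" unfolding gs using hs Ds by (rule suminf_diff[symmetric])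
  also have "suminf (hh k) = MI p" using hh_sums[OF ch] sums_unique by metis
  finally have "suminf D = 0" using kl by simp
  then have "\<forall>t. D t = 0" using suminf_eq_zero_iff[OF Ds] Dn by blast
  then show ?thesis using D_props(2)[OF ch] pi_iff unfolding D_def by blast
qed


lemma FE_props:
  assumes ch: "channel UNIV k"
    and pur: "\<forall>a b. k a t > 0 \<longrightarrow> k b t > 0 \<longrightarrow> \<pi> a = \<pi> b"
  shows "ee k t \<le> ff k t"
    and "ff k t = ee k t \<longleftrightarrow> (\<forall>a b. \<pi> a = \<pi> b \<longrightarrow> k a t = k b t)"
proof -
  have knn: "\<And>a. k a t \<ge> 0" using ch_nonneg[OF ch] by blast
  have "ee k t \<le> ff k t \<and> (ff k t = ee k t \<longleftrightarrow> (\<forall>a b. \<pi> a = \<pi> b \<longrightarrow> k a t = k b t))"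
  proof (cases "push k p t = 0")
    case True
    then have z: "\<And>a. k a t = 0" using q_zero[OF ch] by blast
    show ?thesis unfolding ff_def ee_def by (simp add: z)
  next
    case False
    define q where "q = push k p t"
    obtain a0 where a0: "k a0 t > 0" using exists_pos[OF ch False] by blast
    have qp: "q > 0" using q_pos[OF ch a0] unfolding q_def .
    define S where "S = {a. \<pi> a = \<pi> a0}"
    define P0 where "P0 = Pc (\<pi> a0)"
    have P0p: "P0 > 0" unfolding P0_def by (rule Pc_pos)
    have P0S: "P0 = sum p S" unfolding P0_def Pc_def S_def ..
    have out: "\<And>a. a \<notin> S \<Longrightarrow> k a t = 0"
    proof -
      fix a assume aS: "a \<notin> S"
      show "k a t = 0"
      proof (rule ccontr)
        assume "k a t \<noteq> 0"
        then have "k a t > 0" using knn[of a] by simp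
        then have "\<pi> a = \<pi> a0" using pur a0 by blast
        then show False using aS unfolding S_def by simp
      qed
    qed
    define u where "u a = p a * k a t" for a
    define v where "v a = p a * q / P0" for a
    have sumS: "sum g S = sum g UNIV" if gz: "\<And>a. k a t = 0 \<Longrightarrow> g a = 0" for g :: "_ \<Rightarrow> real"
    proof (rule sum.mono_neutral_left)
      show "\<forall>i\<in>UNIV - S. g i = 0" using out gz by blast
    qed simp_all
    have Su: "sum u S = q"
    proof -
      have "sum u S = sum u UNIV" by (rule sumS) (simp add: u_def)
      also have "\<dots> = q" unfolding q_def push_def u_def by (simp only: mult.commute)
      finally show ?thesis .
    qed
    have Sv: "sum v S = q"
    proof -
      have "sum v S = (\<Sum>a\<in>S. p a * (q / P0))" unfolding v_def by simp
      also have "\<dots> = sum p S * (q / P0)" by (simp only: sum_distrib_right)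
      finally show ?thesis using P0S P0p by simp
    qed
    have upos: "\<forall>a\<in>S. u a \<ge> 0"
    proof
      fix a assume "a \<in> S"
      show "u a \<ge> 0" unfolding u_def using knn[of a] pos'[of a] by simp
    qed
    have vpos: "\<forall>a\<in>S. v a > 0"
    proof
      fix a assume "a \<in> S"
      show "v a > 0" unfolding v_def using pos'[of a] qp P0p by simp
    qed
    have eq: "ff k t - ee k t = (\<Sum>a\<in>S. u a * ln (u a / v a))"
    proof -
      have "ff k t - ee k t = (\<Sum>a\<in>UNIV. p a * k a t * ln (k a t / q) - p a * k a t * (- ln (Pc (\<pi> a))))"
        unfolding ff_def ee_def q_def by (simp only: sum_subtractf)
      also have "\<dots> = (\<Sum>a\<in>S. p a * k a t * ln (k a t / q) - p a * k a t * (- ln (Pc (\<pi> a))))"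
        by (rule sumS[symmetric]) simp
      also have "\<dots> = (\<Sum>a\<in>S. u a * ln (u a / v a))"
      proof (rule sum.cong)
        fix a assume aS: "a \<in> S"
        show "p a * k a t * ln (k a t / q) - p a * k a t * (- ln (Pc (\<pi> a))) = u a * ln (u a / v a)"
        proof (cases "k a t = 0")
          case True then show ?thesis unfolding u_def by simp
        next
          case False
          then have k: "k a t > 0" using knn[of a] by simp
          have PcS: "Pc (\<pi> a) = P0" using aS unfolding S_def P0_def by simp
          have "u a / v a = (k a t / q) * P0" unfolding u_def v_def using pos'[of a] qp P0p
            by (simp add: field_simps)
          moreover have "k a t / q > 0" using k qp by simp
          ultimately have "ln (u a / v a) = ln (k a t / q) + ln P0"
            using P0p ln_mult_pos by metis
          then show ?thesis unfolding u_def PcS by (simp add: algebra_simps)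
        qed
      qed simp
      finally show ?thesis .
    qed
    have g1: "ee k t \<le> ff k t" using gibbs_ge[of S u v] upos vpos Su Sv eq by simp
    have g2: "(\<forall>a b. \<pi> a = \<pi> b \<longrightarrow> k a t = k b t)" if z: "ff k t = ee k t"
    proof -
      have uv: "\<forall>a\<in>S. u a = v a" using gibbs_eq[of S u v] upos vpos Su Sv z eq by simp
      have kS: "k a t = q / P0" if aS: "a \<in> S" for a
      proof -
        have "p a * k a t = p a * (q / P0)" using uv aS unfolding u_def v_def by simp
        moreover have "p a \<noteq> 0" using pos'[of a] by simp
        ultimately show ?thesis using mult_left_cancel by blast
      qed
      show ?thesis
      proof (intro allI impI)
        fix a b assume ab: "\<pi> a = \<pi> b"
        show "k a t = k b t"
        proof (cases "a \<in> S")
          case True then have "b \<in> S" using ab unfolding S_def by simp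
          then show ?thesis using True kS by simp
        next
          case False then have "b \<notin> S" using ab unfolding S_def by simp
          then show ?thesis using False out by simp
        qed
      qed
    qed
    have g3: "ff k t = ee k t" if K: "\<forall>a b. \<pi> a = \<pi> b \<longrightarrow> k a t = k b t"
    proof -
      have kc: "k a t = k a0 t" if "a \<in> S" for a
      proof -
        have "\<pi> a = \<pi> a0" using that unfolding S_def by simp
        then show ?thesis using K by blast
      qed
      have "q = sum u S" using Su by simp
      also have "\<dots> = (\<Sum>a\<in>S. p a * k a0 t)" unfolding u_def using kc by simp
      also have "\<dots> = P0 * k a0 t" using P0S by (simp only: sum_distrib_right)
      finally have k0: "k a0 t = q / P0" using P0p by (simp add: field_simps)
      have "\<forall>a\<in>S. u a = v a" unfolding u_def v_def using kc k0 by simp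
      then have "(\<Sum>a\<in>S. u a * ln (u a / v a)) = (\<Sum>a\<in>S. 0)"
      proof (intro sum.cong refl)
        fix a assume aS: "a \<in> S"
        then have "u a = v a" "v a > 0" using \<open>\<forall>a\<in>S. u a = v a\<close> vpos by auto
        then show "u a * ln (u a / v a) = 0" by simp
      qed
      then have "(\<Sum>a\<in>S. u a * ln (u a / v a)) = 0" by simp
      then show ?thesis using eq by simp
    qed
    show ?thesis using g1 g2 g3 by blast
  qed
  then show "ee k t \<le> ff k t"
    and "ff k t = ee k t \<longleftrightarrow> (\<forall>a b. \<pi> a = \<pi> b \<longrightarrow> k a t = k b t)" by blast+
qed

lemma constraint_props:
  assumes c: "IIB_constraint p (MI p) k"
  shows "channel UNIV k"
    and "\<forall>t a b. k a t > 0 \<longrightarrow> k b t > 0 \<longrightarrow> \<pi> a = \<pi> b"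
    and "summable (ff k)"
    and "Hc \<le> MI_ch p k"
    and "MI_ch p k = Hc \<Longrightarrow> \<forall>a b t. \<pi> a = \<pi> b \<longrightarrow> k a t = k b t"
proof -
  show ch: "channel UNIV k" using c unfolding IIB_constraint_def by blast
  have kl: "KL (push k p) (push k r) = MI p" using c unfolding IIB_constraint_def r_def by blast
  show pur: "\<forall>t a b. k a t > 0 \<longrightarrow> k b t > 0 \<longrightarrow> \<pi> a = \<pi> b"
    by (rule purity[OF ch kl])
  have purt: "\<forall>a b. k a t > 0 \<longrightarrow> k b t > 0 \<longrightarrow> \<pi> a = \<pi> b" for t using pur by blast
  have le: "ee k t \<le> ff k t" for t by (rule FE_props(1)[OF ch purt])
  have es: "summable (ee k)" using ee_sums[OF ch] sums_summable by blast
  have ws: "summable (ww k)" using ww_sums[OF ch] sums_summable by blast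
  show fs: "summable (ff k)"
  proof (rule summable_comparison_test'[OF ws])
    show "norm (ff k t) \<le> ww k t" for t
      using le[of t] ee_nonneg[OF ch, of t] ff_le_ww[OF ch, of t] by simp
  qed
  have MIeq: "MI_ch p k = suminf (ff k)" unfolding MI_ch_def ff_def ..
  have He: "Hc = suminf (ee k)" using ee_sums[OF ch] sums_unique by blast
  show "Hc \<le> MI_ch p k" unfolding MIeq He by (rule suminf_le[OF le es fs])
  assume "MI_ch p k = Hc"
  then have "suminf (\<lambda>t. ff k t - ee k t) = 0" using suminf_diff[OF fs es] MIeq He by simp
  moreover have "\<And>t. 0 \<le> ff k t - ee k t" using le by simp
  ultimately have z: "\<forall>t. ff k t - ee k t = 0"
    using suminf_eq_zero_iff[OF summable_diff[OF fs es]] by blast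
  show "\<forall>a b t. \<pi> a = \<pi> b \<longrightarrow> k a t = k b t"
  proof (intro allI impI)
    fix a b t assume ab: "\<pi> a = \<pi> b"
    have "ff k t = ee k t" using z by simp
    then have "\<forall>a b. \<pi> a = \<pi> b \<longrightarrow> k a t = k b t" using FE_props(2)[OF ch purt] by blast
    then show "k a t = k b t" using ab by blast
  qed
qed

lemma pi_in: "\<pi> a \<in> {1..n}" using pi_range by blast

lemma cong_props:
  assumes g: "congruent_channel {1..n} \<gamma>" and kdef: "k = (\<lambda>a t. \<gamma> (\<pi> a) t)"
  shows "IIB_constraint p (MI p) k" and "MI_ch p k = Hc"
proof -
  have gch: "channel {1..n} \<gamma>" and gdis: "\<forall>j\<in>{1..n}. \<forall>j'\<in>{1..n}. j \<noteq> j' \<longrightarrow> (\<forall>t. \<gamma> j t = 0 \<or> \<gamma> j' t = 0)"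
    using g unfolding congruent_channel_def by blast+
  have ch: "channel UNIV k" unfolding channel_def
  proof
    fix a
    have "\<pi> a \<in> {1..n}" by (rule pi_in)
    then have "(\<forall>t. \<gamma> (\<pi> a) t \<ge> 0) \<and> \<gamma> (\<pi> a) sums 1" using gch unfolding channel_def by blast
    then show "(\<forall>t. k a t \<ge> 0) \<and> k a sums 1" unfolding kdef by simp
  qed
  have purt: "\<forall>a b. k a t > 0 \<longrightarrow> k b t > 0 \<longrightarrow> \<pi> a = \<pi> b" for t
  proof (intro allI impI)
    fix a b assume ka: "k a t > 0" and kb: "k b t > 0"
    show "\<pi> a = \<pi> b"
    proof (rule ccontr)
      assume ne: "\<pi> a \<noteq> \<pi> b"
      have "\<gamma> (\<pi> a) t = 0 \<or> \<gamma> (\<pi> b) t = 0" using gdis pi_in[of a] pi_in[of b] ne by blast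
      then show False using ka kb unfolding kdef by auto
    qed
  qed
  have hg: "gg k t = hh k t" for t
  proof (cases "push k p t = 0")
    case True
    then have z: "\<And>a. k a t = 0" using q_zero[OF ch] by blast
    show ?thesis unfolding hh_def gg_def using True by (simp add: z)
  next
    case False
    obtain a0 where a0: "k a0 t > 0" using exists_pos[OF ch False] by blast
    have rr: "\<rho> a = \<rho> a0" if "k a t > 0" for a
    proof -
      have "\<pi> a = \<pi> a0" using purt[of t] that a0 by blast
      then show ?thesis using pi_iff by blast
    qed
    have kp: "k a t * p a = \<rho> a0 * (k a t * r a)" for a
    proof (cases "k a t = 0")
      case True then show ?thesis by simp
    next
      case False then have "k a t > 0" using ch_nonneg[OF ch, of a t] by simp
      then have e: "\<rho> a = \<rho> a0" by (rule rr)
      have "p a = \<rho> a * r a" unfolding \<rho>_def using r_pos[of a] by simp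
      then show ?thesis unfolding e[symmetric] by simp
    qed
    have qs: "push k p t = \<rho> a0 * push k r t" unfolding push_def
      by (simp only: kp sum_distrib_left)
    have sp: "push k r t > 0" using s_pos[OF ch a0] .
    have hh: "hh k t = push k p t * ln (\<rho> a0)"
    proof -
      have "hh k t = (\<Sum>a\<in>UNIV. k a t * p a * ln (\<rho> a0))" unfolding hh_def
      proof (rule sum.cong)
        fix a show "k a t * p a * ln (\<rho> a) = k a t * p a * ln (\<rho> a0)"
        proof (cases "k a t = 0")
          case True then show ?thesis by simp
        next
          case False then have "k a t > 0" using ch_nonneg[OF ch, of a t] by simp
          then show ?thesis using rr by simp
        qed
      qed simp
      then show ?thesis unfolding push_def by (simp only: sum_distrib_right)
    qed
    have "push k p t / push k r t = \<rho> a0" using qs sp by simp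
    then show ?thesis unfolding gg_def hh by simp
  qed
  have "KL (push k p) (push k r) = suminf (gg k)" unfolding KL_def gg_def by simp
  also have "gg k = hh k" using hg by (intro ext) simp
  also have "suminf (hh k) = MI p" using hh_sums[OF ch] by (rule sums_unique[symmetric])
  finally have kl: "KL (push k p) (push k r) = MI p" .
  show "IIB_constraint p (MI p) k" unfolding IIB_constraint_def using ch kl unfolding r_def by simp
  have fe: "ff k t = ee k t" for t
  proof -
    have "\<forall>a b. \<pi> a = \<pi> b \<longrightarrow> k a t = k b t" unfolding kdef by simp
    then show ?thesis using FE_props(2)[OF ch purt] by blast
  qed
  have "MI_ch p k = suminf (ff k)" unfolding MI_ch_def ff_def ..
  also have "ff k = ee k" using fe by (intro ext) simp
  also have "suminf (ee k) = Hc" using ee_sums[OF ch] by (rule sums_unique[symmetric])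
  finally show "MI_ch p k = Hc" .
qed

theorem main:
  "{k. IIB_solution p (MI p) k} =
         {k. \<exists>\<gamma>. congruent_channel {1..n} \<gamma> \<and> k = (\<lambda>a t. \<gamma> (\<pi> a) t)}"
proof (intro equalityI subsetI)
  fix k assume "k \<in> {k. \<exists>\<gamma>. congruent_channel {1..n} \<gamma> \<and> k = (\<lambda>a t. \<gamma> (\<pi> a) t)}"
  then obtain \<gamma> where g: "congruent_channel {1..n} \<gamma>" and kd: "k = (\<lambda>a t. \<gamma> (\<pi> a) t)" by blast
  have "IIB_solution p (MI p) k" unfolding IIB_solution_def
    using cong_props[OF g kd] constraint_props(4) by auto
  then show "k \<in> {k. IIB_solution p (MI p) k}" by simp
next
  fix k assume "k \<in> {k. IIB_solution p (MI p) k}"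
  then have sol: "IIB_solution p (MI p) k" by simp
  then have c: "IIB_constraint p (MI p) k" unfolding IIB_solution_def by blast
  define \<gamma>0 where "\<gamma>0 j t = (if t = j then 1 else (0::real))" for j t :: nat
  have g0: "congruent_channel {1..n} \<gamma>0" unfolding congruent_channel_def channel_def \<gamma>0_def
    using sums_single[of _ "\<lambda>_. 1::real"] by auto
  define k0 where "k0 = (\<lambda>a t. \<gamma>0 (\<pi> a) t)"
  have "MI_ch p k \<le> MI_ch p k0" using sol cong_props(1)[OF g0 k0_def] unfolding IIB_solution_def by blast
  then have "MI_ch p k = Hc" using cong_props(2)[OF g0 k0_def] constraint_props(4)[OF c] by simp
  then have K: "\<forall>a b t. \<pi> a = \<pi> b \<longrightarrow> k a t = k b t" using constraint_props(5)[OF c] by blast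
  have ch: "channel UNIV k" using constraint_props(1)[OF c] .
  have pur: "\<forall>t a b. k a t > 0 \<longrightarrow> k b t > 0 \<longrightarrow> \<pi> a = \<pi> b" using constraint_props(2)[OF c] .
  define rep where "rep j = (SOME a. \<pi> a = j)" for j
  have rep: "j \<in> {1..n} \<Longrightarrow> \<pi> (rep j) = j" for j
    unfolding rep_def using pi_range by (metis (mono_tags, lifting) imageE someI_ex)
  define \<gamma> where "\<gamma> j t = k (rep j) t" for j t
  have kd: "k = (\<lambda>a t. \<gamma> (\<pi> a) t)"
  proof (intro ext)
    fix a t
    have "\<pi> (rep (\<pi> a)) = \<pi> a" using rep pi_in by blast
    then show "k a t = \<gamma> (\<pi> a) t" unfolding \<gamma>_def using K by metis
  qed
  have "congruent_channel {1..n} \<gamma>" unfolding congruent_channel_def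
  proof (intro conjI ballI impI allI)
    show "channel {1..n} \<gamma>" using ch unfolding channel_def \<gamma>_def by blast
    fix j j' t assume j: "j \<in> {1..n}" and j': "j' \<in> {1..n}" and ne: "j \<noteq> j'"
    show "\<gamma> j t = 0 \<or> \<gamma> j' t = 0"
    proof (rule ccontr)
      assume "\<not> (\<gamma> j t = 0 \<or> \<gamma> j' t = 0)"
      then have "k (rep j) t > 0" "k (rep j') t > 0"
        unfolding \<gamma>_def using ch_nonneg[OF ch] by (auto simp: less_le)
      then have "\<pi> (rep j) = \<pi> (rep j')" using pur by blast
      then show False using rep[OF j] rep[OF j'] ne by simp
    qed
  qed
  then show "k \<in> {k. \<exists>\<gamma>. congruent_channel {1..n} \<gamma> \<and> k = (\<lambda>a t. \<gamma> (\<pi> a) t)}"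
    using kd by blast
qed

end

theorem corollary9:
  fixes p :: "'x::finite \<times> 'y::finite \<Rightarrow> real"
    and \<pi> :: "'x \<times> 'y \<Rightarrow> nat" and n :: nat
  assumes pos: "\<forall>a. p a > 0"
    and total: "(\<Sum>a\<in>UNIV. p a) = 1"
    and pi_range: "\<pi> ` UNIV = {1..n}"
    and pi_classes: "\<forall>a b. \<pi> a = \<pi> b \<longleftrightarrow> p a / prodmarg p a = p b / prodmarg p b"
  shows "{k. IIB_solution p (MI p) k} =
         {k. \<exists>\<gamma>. congruent_channel {1..n} \<gamma> \<and> k = (\<lambda>a t. \<gamma> (\<pi> a) t)}"
proof -
  interpret iib p \<pi> n using assms by unfold_locales
  show ?thesis by (rule main)
qed

end
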